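(* In the setting below, for any set $\mathcal{F}$ of fixed possible edges and any input graph $G\in\mathcal{G}$, the random vertex sequence $W=W_0W_1\cdots W_n$ generated by one iteration of the Unweighted Graph Sampler (run until the first $n\ge 1$ with $W_n=W_0$) has finite expected length.
   Context: Setting (unweighted graphs). $V$ is a finite vertex set; graphs are either all directed or all undirected and have no multiple edges; $uv$ denotes the (possible) edge from $u$ to $v$ (for undirected graphs $uv=vu$). $G_0$ is a given graph on $V$ and $\mathcal{F}$ is a given subset of the possible edges on $V$. $\mathcal{G}$ is the set of all graphs $G$ on $V$ having the same degree sequence as $G_0$ (for directed graphs: the same in-degree and the same out-degree at every vertex) and satisfying $E(G)\cap\mathcal{F}=E(G_0)\cap\mathcal{F}$. The set of known edges is $\tilde{\mathcal{F}}=\{uv : uv\in E(G)\text{ for all }G\in\mathcal{G}, \text{ or } uv\notin E(G)\text{ for all }G\in\mathcal{G}\}$ (so $\mathcal{F}\subseteq\tilde{\mathcal{F}}$). For a graph $G$ and vertex $u$ define $N_G(u)=\{v\in V: vu\in E(G),\ vu\notin\tilde{\mathcal{F}}\}$ and $M_G(u)=\{v\in V: uv\notin E(G),\ uv\notin\tilde{\mathcal{F}}\}$. Unweighted Graph Sampler (one iteration, input $G\in\mathcal{G}$): set $W_{-1}=*$ (a dummy symbol), sample $W_0$ uniformly from $\{v\in V: N_G(v)\neq\emptyset\}$, set $n=0$; then repeat: sample $W_{n+1}$ uniformly from $N_G(W_n)\setminus\{W_{n-1}\}$; sample $W_{n+2}$ uniformly from $M_G(W_{n+1})$ (computed in the current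 graph $G$); delete the edge $W_{n+1}W_n$ from $E(G)$ and add the edge $W_{n+1}W_{n+2}$ to $E(G)$; set $n\leftarrow n+2$; until $W_n=W_0$. Output the current $G$. (Here $G$ always denotes the current, progressively modified, graph.) *)

theory Defs
  imports "HOL-Probability.Probability"
begin

text \<open>A directed edge uv is the
pair (u,v); an undirected graph is represented by a symmetric edge set (the edge uv = vu is
the two pairs (u,v),(v,u)).\<close>

type_synonym 'a graph = "('a \<times> 'a) set"

definition possible_edges :: "'a set \<Rightarrow> ('a \<times> 'a) set" where
  "possible_edges V = {(u,v). u \<in> V \<and> v \<in> V \<and> u \<noteq> v}"

definition is_graph :: "bool \<Rightarrow> 'a set \<Rightarrow> 'a graph \<Rightarrow> bool" where
  "is_graph directed V E \<longleftrightarrow> E \<subseteq> possible_edges V \<and> (\<not> directed \<longrightarrow> sym E)"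

definition indeg :: "'a graph \<Rightarrow> 'a \<Rightarrow> nat" where
  "indeg E v = card {u. (u,v) \<in> E}"

definition outdeg :: "'a graph \<Rightarrow> 'a \<Rightarrow> nat" where
  "outdeg E v = card {w. (v,w) \<in> E}"

text \<open>The class \<G>: same (in- and out-)degree at every vertex as G0, and agreeing with G0 on F.
For undirected (symmetric) graphs in- and out-degree both equal the degree.\<close>
definition graph_class :: "bool \<Rightarrow> 'a set \<Rightarrow> 'a graph \<Rightarrow> ('a \<times> 'a) set \<Rightarrow> 'a graph set" where
  "graph_class directed V G0 F =
     {G. is_graph directed V G \<and>
         (\<forall>v\<in>V. indeg G v = indeg G0 v \<and> outdeg G v = outdeg G0 v) \<and>
         G \<inter> F = G0 \<inter> F}"

definition known_edges :: "bool \<Rightarrow> 'a set \<Rightarrow> 'a graph \<Rightarrow> ('a \<times> 'a) set \<Rightarrow> ('a \<times> 'a) set" where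
  "known_edges directed V G0 F =
     {e \<in> possible_edges V. (\<forall>G\<in>graph_class directed V G0 F. e \<in> G) \<or>
                            (\<forall>G\<in>graph_class directed V G0 F. e \<notin> G)}"

definition Nset :: "bool \<Rightarrow> 'a set \<Rightarrow> 'a graph \<Rightarrow> ('a \<times> 'a) set \<Rightarrow> 'a graph \<Rightarrow> 'a \<Rightarrow> 'a set" where
  "Nset directed V G0 F G u =
     {v \<in> V. (v,u) \<in> G \<and> (v,u) \<notin> known_edges directed V G0 F}"

definition Mset :: "bool \<Rightarrow> 'a set \<Rightarrow> 'a graph \<Rightarrow> ('a \<times> 'a) set \<Rightarrow> 'a graph \<Rightarrow> 'a \<Rightarrow> 'a set" where
  "Mset directed V G0 F G u =
     {v \<in> V. (u,v) \<in> possible_edges V \<and> (u,v) \<notin> G \<and> (u,v) \<notin> known_edges directed V G0 F}"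

definition del_edge :: "bool \<Rightarrow> 'a graph \<Rightarrow> 'a \<times> 'a \<Rightarrow> 'a graph" where
  "del_edge directed E e = (if directed then E - {e} else E - {e, (snd e, fst e)})"

definition add_edge :: "bool \<Rightarrow> 'a graph \<Rightarrow> 'a \<times> 'a \<Rightarrow> 'a graph" where
  "add_edge directed E e = (if directed then insert e E else insert e (insert (snd e, fst e) E))"

text \<open>Arguments: W0, current graph G, W_{n-1} (None = the dummy *),
W_n, and the reversed list of vertices generated so far.
Uniform sampling from an empty set yields no result (lost mass), so a run that
gets stuck or never stops contributes to non-losslessness.\<close>
partial_function (spmf) sampler_loop ::
  "bool \<Rightarrow> 'a set \<Rightarrow> 'a graph \<Rightarrow> ('a \<times> 'a) set \<Rightarrow> 'a \<Rightarrow> 'a graph \<Rightarrow> 'a option \<Rightarrow> 'a \<Rightarrow> 'a list \<Rightarrow> 'a list spmf"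
where
  "sampler_loop directed V G0 F w0 G prev cur acc = do {
     w1 \<leftarrow> spmf_of_set (Nset directed V G0 F G cur - set_option prev);
     w2 \<leftarrow> spmf_of_set (Mset directed V G0 F G w1);
     let G' = add_edge directed (del_edge directed G (w1, cur)) (w1, w2);
     let acc' = w2 # w1 # acc;
     if w2 = w0 then return_spmf (rev acc')
     else sampler_loop directed V G0 F w0 G' (Some w1) w2 acc'
   }"

definition sampler_walk :: "bool \<Rightarrow> 'a set \<Rightarrow> 'a graph \<Rightarrow> ('a \<times> 'a) set \<Rightarrow> 'a graph \<Rightarrow> 'a list spmf" where
  "sampler_walk directed V G0 F G = do {
     w0 \<leftarrow> spmf_of_set {v \<in> V. Nset directed V G0 F G v \<noteq> {}};
     sampler_loop directed V G0 F w0 G None w0 [w0]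
   }"

end

theory Submission
  imports Defs
begin


fun steps :: "('s \<Rightarrow> ('r + 's) spmf) \<Rightarrow> nat \<Rightarrow> 's \<Rightarrow> ('r + 's) spmf" where
  "steps body 0 s = return_spmf (Inr s)"
| "steps body (Suc n) s = body s \<bind> (\<lambda>x. case x of Inl r \<Rightarrow> return_spmf (Inl r) | Inr s' \<Rightarrow> steps body n s')"

definition kont :: "('s \<Rightarrow> 'r spmf) \<Rightarrow> ('r + 's) \<Rightarrow> 'r spmf" where
  "kont L x = (case x of Inl r \<Rightarrow> return_spmf r | Inr s' \<Rightarrow> L s')"

lemma L_steps:
  assumes "\<And>s. L s = body s \<bind> kont L"
  shows "L s = steps body n s \<bind> kont L"
proof (induction n arbitrary: s)
  case 0 show ?case by (simp add: kont_def)
next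
  case (Suc n)
  have "steps body (Suc n) s \<bind> kont L = body s \<bind> (\<lambda>x. (case x of Inl r \<Rightarrow> return_spmf (Inl r) | Inr s' \<Rightarrow> steps body n s') \<bind> kont L)" by simp
  also have "... = body s \<bind> kont L"
    apply (rule bind_spmf_cong[OF refl])
    subgoal for x by (cases x) (simp_all add: kont_def Suc[symmetric])
    done
  finally show ?case by (metis assms)
qed

lemma spmf_bind_point: "spmf p x * spmf (f x) y \<le> spmf (p \<bind> f) y"
proof -
  have "ennreal (spmf p x * spmf (f x) y) = (\<integral>\<^sup>+ z. ennreal (spmf (f x) y) * indicator {x} z \<partial>measure_spmf p)"
  proof -
    have "(\<integral>\<^sup>+ z. ennreal (spmf (f x) y) * indicator {x} z \<partial>measure_spmf p) = ennreal (spmf (f x) y) * emeasure (measure_spmf p) {x}"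
      by (rule nn_integral_cmult_indicator) simp
    then show ?thesis by (simp add: emeasure_spmf_single ennreal_mult mult.commute)
  qed
  also have "\<dots> \<le> (\<integral>\<^sup>+ z. spmf (f z) y \<partial>measure_spmf p)"
    by (rule nn_integral_mono) (simp split: split_indicator)
  also have "\<dots> = ennreal (spmf (p \<bind> f) y)" by (simp add: ennreal_spmf_bind)
  finally show ?thesis by (simp add: ennreal_le_iff)
qed

lemma nn_integral_bind_spmf:
  "(\<integral>\<^sup>+x. f x \<partial>measure_spmf (bind_spmf M N)) = (\<integral>\<^sup>+x. \<integral>\<^sup>+y. f y \<partial>measure_spmf (N x) \<partial>measure_spmf M)"
  unfolding measure_spmf_bind o_def
  apply (rule nn_integral_bind[where B="count_space UNIV"])
   apply simp
  apply (simp add: o_def)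
  done

lemma ennreal_add_le: "ennreal (x + y) \<le> ennreal x + ennreal y"
proof (cases "x \<ge> 0 \<and> y \<ge> 0")
  case True then show ?thesis by (simp add: ennreal_plus)
next
  case False
  then show ?thesis
  proof (cases "x < 0")
    case True
    have "ennreal (x+y) \<le> ennreal y" by (rule ennreal_leI) (use True in simp)
    also have "\<dots> \<le> ennreal x + ennreal y" by (rule add_increasing) simp_all
    finally show ?thesis .
  next
    case False2: False
    then have "y < 0" using False by simp
    have "ennreal (x+y) \<le> ennreal x" by (rule ennreal_leI) (use \<open>y < 0\<close> in simp)
    also have "\<dots> \<le> ennreal x + ennreal y" by (rule add_increasing2) simp_all
    finally show ?thesis .
  qed
qed

lemma nn_lin: "(\<integral>\<^sup>+ x. ennreal \<mu> + ennreal (1 - \<mu>) * indicator {x. isl x} x \<partial>measure_spmf S)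
       = ennreal \<mu> * ennreal (weight_spmf S) + ennreal (1 - \<mu>) * ennreal (spmf (map_spmf isl S) True)"
proof -
  have "(\<integral>\<^sup>+ x. ennreal \<mu> + ennreal (1 - \<mu>) * indicator {x. isl x} x \<partial>measure_spmf S)
     = (\<integral>\<^sup>+ x. ennreal \<mu> \<partial>measure_spmf S) + (\<integral>\<^sup>+ x. ennreal (1 - \<mu>) * indicator {x. isl x} x \<partial>measure_spmf S)"
    by (rule nn_integral_add) simp_all
  also have "(\<integral>\<^sup>+ x. ennreal \<mu> \<partial>measure_spmf S) = ennreal \<mu> * ennreal (weight_spmf S)"
    by (simp add: space_measure_spmf measure_spmf.emeasure_eq_measure weight_spmf_def)
  also have "(\<integral>\<^sup>+ x. ennreal (1 - \<mu>) * indicator {x. isl x} x \<partial>measure_spmf S) = ennreal (1 - \<mu>) * emeasure (measure_spmf S) {x. isl x}"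
    by (rule nn_integral_cmult_indicator) simp
  also have "emeasure (measure_spmf S) {x. isl x} = ennreal (spmf (map_spmf isl S) True)"
    by (simp add: spmf_map measure_spmf.emeasure_eq_measure vimage_def)
  finally show ?thesis .
qed

locale walk =
  fixes body :: "'s \<Rightarrow> ('r + 's) spmf" and L :: "'s \<Rightarrow> 'r spmf" and I :: "'s \<Rightarrow> bool"
    and d :: "'s \<Rightarrow> nat" and m :: nat and q :: real and g :: "'r \<Rightarrow> nat" and a :: "'s \<Rightarrow> nat" and c :: nat
  assumes L_eq: "\<And>s. L s = body s \<bind> kont L"
  and inv: "\<And>s s'. I s \<Longrightarrow> Inr s' \<in> set_spmf (body s) \<Longrightarrow> I s'"
  and ll: "\<And>s. I s \<Longrightarrow> lossless_spmf (body s)"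
  and prog: "\<And>s. I s \<Longrightarrow> \<exists>x. q \<le> spmf (body s) x \<and> (case x of Inl _ \<Rightarrow> True | Inr s' \<Rightarrow> d s' < d s)"
  and dbound: "\<And>s. I s \<Longrightarrow> d s \<le> m"
  and q_pos: "0 < q" and q_le: "q \<le> 1"
  and cost1: "\<And>s r. I s \<Longrightarrow> Inl r \<in> set_spmf (body s) \<Longrightarrow> g r \<le> a s + c"
  and cost2: "\<And>s s'. I s \<Longrightarrow> Inr s' \<in> set_spmf (body s) \<Longrightarrow> a s' \<le> a s + c"
begin

lemma steps_ll: "I s \<Longrightarrow> lossless_spmf (steps body n s)"
proof (induction n arbitrary: s)
  case 0 then show ?case by simp
next
  case (Suc n)
  show ?case using Suc.prems ll[OF Suc.prems]
    by (auto split: sum.splits intro: Suc.IH inv)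
qed

lemma steps_set: "I s \<Longrightarrow> x \<in> set_spmf (steps body n s) \<Longrightarrow>
   (case x of Inl r \<Rightarrow> g r \<le> a s + c * n | Inr s' \<Rightarrow> I s' \<and> a s' \<le> a s + c * n)"
proof (induction n arbitrary: s x)
  case 0 then show ?case by simp
next
  case (Suc n)
  from Suc.prems(2) obtain y where y: "y \<in> set_spmf (body s)"
    and x: "x \<in> set_spmf (case y of Inl r \<Rightarrow> return_spmf (Inl r) | Inr s' \<Rightarrow> steps body n s')"
    by (auto simp: set_bind_spmf)
  show ?case
  proof (cases y)
    case (Inl r)
    have "g r \<le> a s + c" using x y Inl cost1[OF Suc.prems(1), of r] by auto
    then show ?thesis using x Inl by simp
  next
    case (Inr s')
    have I': "I s'" using inv[OF Suc.prems(1)] y Inr by simp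
    have a': "a s' \<le> a s + c" using cost2[OF Suc.prems(1)] y Inr by simp
    have "x \<in> set_spmf (steps body n s')" using x Inr by simp
    from Suc.IH[OF I' this] show ?thesis using a'
      by (auto split: sum.splits simp: add_mult_distrib2)
  qed
qed

lemma steps_prob: "I s \<Longrightarrow> d s \<le> n \<Longrightarrow> q ^ Suc n \<le> spmf (map_spmf isl (steps body (Suc n) s)) True"
proof (induction n arbitrary: s)
  case 0
  from prog[OF 0(1)] obtain x where x: "q \<le> spmf (body s) x" "case x of Inl _ \<Rightarrow> True | Inr s' \<Rightarrow> d s' < d s" by blast
  then obtain r where xr: "x = Inl r" using 0 by (cases x) auto
  have "spmf (body s) x * spmf (map_spmf isl (return_spmf (Inl r))) True \<le> spmf (map_spmf isl (steps body (Suc 0) s)) True"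
    unfolding steps.simps(2) map_spmf_bind_spmf
    by (rule order_trans[OF _ spmf_bind_point[where x=x]]) (simp add: xr)
  then show ?case using x(1) by simp
next
  case (Suc n)
  from prog[OF Suc.prems(1)] obtain x where x: "q \<le> spmf (body s) x" "case x of Inl _ \<Rightarrow> True | Inr s' \<Rightarrow> d s' < d s" by blast
  have pt: "spmf (body s) x * spmf (map_spmf isl (case x of Inl r \<Rightarrow> return_spmf (Inl r) | Inr s' \<Rightarrow> steps body (Suc n) s')) True \<le> spmf (map_spmf isl (steps body (Suc (Suc n)) s)) True"
    unfolding steps.simps(2)[of body "Suc n"] map_spmf_bind_spmf
    by (rule order_trans[OF _ spmf_bind_point[where x=x]]) (simp split: sum.splits)
  show ?case
  proof (cases x)
    case (Inl r)
    have "q ^ Suc (Suc n) \<le> q" using q_pos q_le by (simp add: power_le_one mult_left_le mult_le_one)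
    then show ?thesis using pt x Inl by simp
  next
    case (Inr s')
    have "0 < spmf (body s) x" using x q_pos by simp
    then have "x \<in> set_spmf (body s)" by (simp add: in_set_spmf_iff_spmf)
    then have I': "I s'" using inv[OF Suc.prems(1)] Inr by simp
    have "d s' \<le> n" using x(2) Inr Suc.prems(2) by simp
    from Suc.IH[OF I' this] have ih: "q ^ Suc n \<le> spmf (map_spmf isl (steps body (Suc n) s')) True" .
    have "q ^ Suc (Suc n) = q * q ^ Suc n" by simp
    also have "\<dots> \<le> spmf (body s) x * spmf (map_spmf isl (steps body (Suc n) s')) True"
      by (rule mult_mono) (use x ih q_pos in auto)
    finally show ?thesis using pt Inr by simp
  qed
qed

lemma nn_one: "(\<integral>\<^sup>+ y. 1 \<partial>measure_spmf r) = ennreal (weight_spmf r)"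
  by (simp add: space_measure_spmf measure_spmf.emeasure_eq_measure weight_spmf_def)

lemma nn_one': "emeasure (measure_spmf r) (space (measure_spmf r)) = ennreal (weight_spmf r)"
  by (simp add: space_measure_spmf measure_spmf.emeasure_eq_measure weight_spmf_def)

lemma P_bound: "I s \<Longrightarrow> q ^ Suc m \<le> spmf (map_spmf isl (steps body (Suc m) s)) True"
  using steps_prob dbound by blast

lemma L_lossless:
  assumes I0: "I s0"
  shows "I s \<Longrightarrow> lossless_spmf (L s)"
proof -
  define w where "w s = weight_spmf (L s)" for s
  define \<mu> where "\<mu> = Inf (w ` Collect I)"
  define p where "p = q ^ Suc m"
  have p_pos: "0 < p" unfolding p_def using q_pos by simp
  have bdd: "bdd_below (w ` Collect I)" unfolding w_def by (rule bdd_belowI[of _ 0]) (auto simp: weight_spmf_nonneg)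
  have mu_le: "\<mu> \<le> w s" if "I s" for s unfolding \<mu>_def using bdd that by (auto intro: cInf_lower)
  have mu_nonneg: "0 \<le> \<mu>" unfolding \<mu>_def using I0 by (auto intro!: cInf_greatest simp: w_def weight_spmf_nonneg)
  have mu_le1: "\<mu> \<le> 1" using mu_le[OF I0] weight_spmf_le_1[of "L s0"] by (simp add: w_def)
  have key: "\<mu> + (1 - \<mu>) * p \<le> w s" if Is: "I s" for s
  proof -
    let ?S = "steps body (Suc m) s"
    let ?P = "spmf (map_spmf isl ?S) True"
    have PS: "p \<le> ?P" using P_bound[OF Is] by (simp add: p_def)
    have llS: "lossless_spmf ?S" using steps_ll[OF Is] .
    have "ennreal (w s) = (\<integral>\<^sup>+ y. 1 \<partial>measure_spmf (L s))" by (simp only: nn_one w_def)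
    also have "\<dots> = (\<integral>\<^sup>+ x. \<integral>\<^sup>+ y. 1 \<partial>measure_spmf (kont L x) \<partial>measure_spmf ?S)"
      by (subst L_steps[OF L_eq, of s "Suc m"]) (rule nn_integral_bind_spmf)
    also have "\<dots> \<ge> (\<integral>\<^sup>+ x. ennreal \<mu> + ennreal (1 - \<mu>) * indicator {x. isl x} x \<partial>measure_spmf ?S)"
    proof (rule nn_integral_mono_AE, unfold AE_measure_spmf_iff, intro ballI)
      fix x assume x: "x \<in> set_spmf ?S"
      show "ennreal \<mu> + ennreal (1 - \<mu>) * indicator {x. isl x} x \<le> (\<integral>\<^sup>+ y. 1 \<partial>measure_spmf (kont L x))"
      proof (cases x)
        case (Inl r)
        then show ?thesis using mu_nonneg mu_le1
          by (simp add: nn_one' kont_def ennreal_plus[symmetric] del: ennreal_plus)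
      next
        case (Inr s')
        have "I s'" using steps_set[OF Is x] Inr by simp
        then show ?thesis using Inr mu_le[of s'] by (simp add: nn_one' kont_def w_def)
      qed
    qed
    also have "(\<integral>\<^sup>+ x. ennreal \<mu> + ennreal (1 - \<mu>) * indicator {x. isl x} x \<partial>measure_spmf ?S)
       = ennreal \<mu> * ennreal (weight_spmf ?S) + ennreal (1 - \<mu>) * ennreal ?P"
      by (rule nn_lin)
    also have "\<dots> = ennreal (\<mu> + (1 - \<mu>) * ?P)"
      using llS mu_le1 mu_nonneg by (simp add: lossless_weight_spmfD ennreal_mult[symmetric] ennreal_plus[symmetric] del: ennreal_plus)
    finally have "\<mu> + (1 - \<mu>) * ?P \<le> w s" by (simp add: ennreal_le_iff w_def weight_spmf_nonneg)
    moreover have "(1 - \<mu>) * p \<le> (1 - \<mu>) * ?P" by (rule mult_left_mono[OF PS]) (use mu_le1 in linarith)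
    ultimately show ?thesis by linarith
  qed
  have "\<mu> + (1 - \<mu>) * p \<le> Inf (w ` Collect I)" by (rule cInf_greatest) (use I0 key in auto)
  then have "\<mu> + (1 - \<mu>) * p \<le> \<mu>" by (simp only: \<mu>_def[symmetric])
  then have "(1 - \<mu>) * p \<le> 0" by linarith
  then have "\<mu> \<ge> 1" using p_pos by (simp add: mult_le_0_iff)
  show "lossless_spmf (L s)" if "I s"
  proof -
    have "1 \<le> w s" using mu_le[OF that] \<open>\<mu> \<ge> 1\<close> by linarith
    then have "weight_spmf (L s) = 1" using weight_spmf_le_1[of "L s"] unfolding w_def by linarith
    then show ?thesis by (simp add: lossless_spmf_def)
  qed
qed

lemma ennreal_SUP_min: "ennreal x = (SUP K::nat. ennreal (min x (real K)))"
proof (rule antisym)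
  obtain K :: nat where "x \<le> real K" using real_arch_simple by blast
  then have "ennreal x = ennreal (min x (real K))" by simp
  then show "ennreal x \<le> (SUP K::nat. ennreal (min x (real K)))"
    by (metis SUP_upper UNIV_I)
next
  show "(SUP K::nat. ennreal (min x (real K))) \<le> ennreal x"
    by (rule SUP_least) (rule ennreal_leI, simp)
qed

lemma L_expect:
  assumes I0: "I s0"
  shows "I s \<Longrightarrow> (\<integral>\<^sup>+ r. ennreal (real (g r)) \<partial>measure_spmf (L s)) \<le> ennreal (real (a s) + real (c * Suc m) / q ^ Suc m)"
proof -
  define p where "p = q ^ Suc m"
  define C where "C = real (c * Suc m)"
  define D where "D = C / p"
  have p_pos: "0 < p" unfolding p_def using q_pos by simp
  have p_le: "p \<le> 1" unfolding p_def using q_pos q_le by (simp add: power_le_one mult_le_one)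
  have C_nonneg: "0 \<le> C" unfolding C_def by simp
  define u where "u K s = (\<integral>\<^sup>+ r. ennreal (min (real (g r) - real (a s)) (real K)) \<partial>measure_spmf (L s))" for K :: nat and s
  have u_le: "u K s \<le> ennreal (real K)" for K s
  proof -
    have "u K s \<le> (\<integral>\<^sup>+ r. ennreal (real K) \<partial>measure_spmf (L s))"
      unfolding u_def by (rule nn_integral_mono) (rule ennreal_leI, simp)
    also have "\<dots> = ennreal (real K) * ennreal (weight_spmf (L s))" by (simp add: nn_one')
    also have "\<dots> \<le> ennreal (real K) * 1" by (rule mult_left_mono) (simp_all add: weight_spmf_le_1)
    finally show ?thesis by simp
  qed
  define S where "S K = (SUP s\<in>Collect I. u K s)" for K
  have u_S: "I s \<Longrightarrow> u K s \<le> S K" for K s unfolding S_def by (auto intro: SUP_upper)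
  have S_le: "S K \<le> ennreal (real K)" for K unfolding S_def by (rule SUP_least) (rule u_le)
  have rec: "u K s \<le> ennreal C + S K * ennreal (1 - p)" if Is: "I s" for K s
  proof -
    let ?S = "steps body (Suc m) s"
    let ?P = "spmf (map_spmf isl ?S) True"
    let ?h = "\<lambda>r. ennreal (min (real (g r) - real (a s)) (real K))"
    have PS: "p \<le> ?P" using P_bound[OF Is] by (simp add: p_def)
    have llS: "lossless_spmf ?S" using steps_ll[OF Is] .
    have "u K s = (\<integral>\<^sup>+ x. \<integral>\<^sup>+ r. ?h r \<partial>measure_spmf (kont L x) \<partial>measure_spmf ?S)"
      unfolding u_def by (subst L_steps[OF L_eq, of s "Suc m"]) (rule nn_integral_bind_spmf)
    also have "\<dots> \<le> (\<integral>\<^sup>+ x. ennreal C + S K * indicator {x. \<not> isl x} x \<partial>measure_spmf ?S)"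
    proof (rule nn_integral_mono_AE, unfold AE_measure_spmf_iff, intro ballI)
      fix x assume x: "x \<in> set_spmf ?S"
      show "(\<integral>\<^sup>+ r. ?h r \<partial>measure_spmf (kont L x)) \<le> ennreal C + S K * indicator {x. \<not> isl x} x"
      proof (cases x)
        case (Inl r)
        have "g r \<le> a s + c * Suc m" using steps_set[OF Is x] Inl by simp
        then have "?h r \<le> ennreal C" unfolding C_def by (intro ennreal_leI) linarith
        then show ?thesis using Inl by (simp add: kont_def measure_spmf_return_spmf nn_integral_return)
      next
        case (Inr s')
        have I': "I s'" and as': "a s' \<le> a s + c * Suc m" using steps_set[OF Is x] Inr by simp_all
        have as'r: "real (a s') \<le> real (a s) + C" unfolding C_def using as' by (metis of_nat_add of_nat_le_iff)
        have "(\<integral>\<^sup>+ r. ?h r \<partial>measure_spmf (L s')) \<le>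
            (\<integral>\<^sup>+ r. ennreal (min (real (g r) - real (a s')) (real K)) + ennreal C \<partial>measure_spmf (L s'))"
        proof (rule nn_integral_mono)
          fix r
          have "min (real (g r) - real (a s)) (real K) \<le> min (real (g r) - real (a s')) (real K) + C"
            using as'r C_nonneg by (auto simp: min_def)
          then have "?h r \<le> ennreal (min (real (g r) - real (a s')) (real K) + C)" by (rule ennreal_leI)
          also have "\<dots> \<le> ennreal (min (real (g r) - real (a s')) (real K)) + ennreal C" by (rule ennreal_add_le)
          finally show "?h r \<le> ennreal (min (real (g r) - real (a s')) (real K)) + ennreal C" .
        qed
        also have "\<dots> = u K s' + ennreal C * ennreal (weight_spmf (L s'))"
          unfolding u_def by (subst nn_integral_add) (simp_all add: nn_one')
        also have "\<dots> \<le> S K + ennreal C * 1"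
          by (intro add_mono u_S[OF I'] mult_left_mono) (simp_all add: weight_spmf_le_1)
        finally show ?thesis using Inr by (simp add: kont_def add.commute)
      qed
    qed
    also have "\<dots> = ennreal C * ennreal (weight_spmf ?S) + S K * emeasure (measure_spmf ?S) {x. \<not> isl x}"
      by (subst nn_integral_add) (simp_all add: nn_one' nn_integral_cmult_indicator)
    also have "emeasure (measure_spmf ?S) {x. \<not> isl x} = ennreal (1 - ?P)"
    proof -
      have "measure (measure_spmf ?S) {x. \<not> isl x} = measure (measure_spmf ?S) (space (measure_spmf ?S) - {x. isl x})"
        by (simp add: space_measure_spmf Compl_eq_Diff_UNIV[symmetric] Collect_neg_eq)
      also have "\<dots> = weight_spmf ?S - measure (measure_spmf ?S) {x. isl x}"
        by (subst measure_spmf.finite_measure_compl) (simp_all add: weight_spmf_def space_measure_spmf)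
      also have "\<dots> = 1 - ?P" using llS by (simp add: lossless_weight_spmfD spmf_map vimage_def)
      finally show ?thesis by (simp add: measure_spmf.emeasure_eq_measure)
    qed
    also have "ennreal C * ennreal (weight_spmf ?S) + S K * ennreal (1 - ?P) \<le> ennreal C + S K * ennreal (1 - p)"
      using llS PS by (intro add_mono mult_left_mono ennreal_leI) (simp_all add: lossless_weight_spmfD)
    finally show ?thesis .
  qed
  have S_D: "S K \<le> ennreal D" for K
  proof -
    have S_rec: "S K \<le> ennreal C + S K * ennreal (1 - p)"
      unfolding S_def[of K] by (rule SUP_least) (use rec in \<open>simp add: S_def\<close>)
    have "S K < top" using S_le[of K] by (simp add: le_less_trans)
    then obtain \<sigma> where \<sigma>: "S K = ennreal \<sigma>" "0 \<le> \<sigma>" by (cases "S K") auto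
    have "ennreal \<sigma> \<le> ennreal (C + \<sigma> * (1 - p))"
      using S_rec \<sigma> p_le C_nonneg by (simp add: ennreal_mult[symmetric] ennreal_plus[symmetric] del: ennreal_plus)
    moreover have "0 \<le> C + \<sigma> * (1 - p)" using \<sigma> p_le C_nonneg by simp
    ultimately have "\<sigma> \<le> C + \<sigma> * (1 - p)" using ennreal_le_iff by blast
    then have "\<sigma> * p \<le> C" by (simp add: algebra_simps)
    then have "\<sigma> \<le> D" unfolding D_def using p_pos by (simp add: pos_le_divide_eq)
    then show ?thesis using \<sigma> by simp
  qed
  show ?thesis if Is: "I s"
  proof -
    have "(\<integral>\<^sup>+ r. ennreal (real (g r)) \<partial>measure_spmf (L s)) \<le>
        (\<integral>\<^sup>+ r. ennreal (real (a s)) + ennreal (real (g r) - real (a s)) \<partial>measure_spmf (L s))"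
      by (rule nn_integral_mono) (use ennreal_add_le[of "real (a s)" "real (g _) - real (a s)"] in simp)
    also have "\<dots> = ennreal (real (a s)) * ennreal (weight_spmf (L s)) + (\<integral>\<^sup>+ r. ennreal (real (g r) - real (a s)) \<partial>measure_spmf (L s))"
      by (subst nn_integral_add) (simp_all add: nn_one')
    also have "(\<integral>\<^sup>+ r. ennreal (real (g r) - real (a s)) \<partial>measure_spmf (L s)) = (SUP K. u K s)"
    proof -
      have "(\<integral>\<^sup>+ r. ennreal (real (g r) - real (a s)) \<partial>measure_spmf (L s)) =
          (\<integral>\<^sup>+ r. (SUP K::nat. ennreal (min (real (g r) - real (a s)) (real K))) \<partial>measure_spmf (L s))"
        by (subst ennreal_SUP_min) (rule refl)
      also have "\<dots> = (SUP K. u K s)" unfolding u_def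
        by (rule nn_integral_monotone_convergence_SUP) (auto simp: incseq_def le_fun_def intro!: ennreal_leI)
      finally show ?thesis .
    qed
    also have "(SUP K. u K s) \<le> ennreal D" by (rule SUP_least) (use u_S[OF Is] S_D order_trans in blast)
    also have "ennreal (real (a s)) * ennreal (weight_spmf (L s)) + ennreal D = ennreal (real (a s) + D)"
      using L_lossless[OF I0 Is] C_nonneg p_pos
      by (simp add: lossless_weight_spmfD D_def ennreal_plus[symmetric] del: ennreal_plus)
    finally show ?thesis by (simp add: D_def C_def p_def)
  qed
qed

end




locale sctx =
  fixes directed :: bool and V :: "'a set" and G0 G :: "'a graph" and F :: "('a \<times> 'a) set"
  assumes finV: "finite V"
  and G_cls: "G \<in> graph_class directed V G0 F"
begin

abbreviation "K \<equiv> known_edges directed V G0 F"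
abbreviation "Cls \<equiv> graph_class directed V G0 F"
abbreviation "NN \<equiv> Nset directed V G0 F"
abbreviation "MM \<equiv> Mset directed V G0 F"

lemma cls_D: "H \<in> Cls \<Longrightarrow> is_graph directed V H \<and> (\<forall>v\<in>V. indeg H v = indeg G0 v \<and> outdeg H v = outdeg G0 v)"
  by (simp add: graph_class_def)

lemma cls_indeg: "H \<in> Cls \<Longrightarrow> v \<in> V \<Longrightarrow> indeg H v = indeg G v"
  using cls_D G_cls by auto

lemma cls_outdeg: "H \<in> Cls \<Longrightarrow> v \<in> V \<Longrightarrow> outdeg H v = outdeg G v"
  using cls_D G_cls by auto

lemma cls_sub: "H \<in> Cls \<Longrightarrow> H \<subseteq> possible_edges V"
  using cls_D by (auto simp: is_graph_def)

lemma cls_sym: "H \<in> Cls \<Longrightarrow> \<not> directed \<Longrightarrow> (u,v) \<in> H \<Longrightarrow> (v,u) \<in> H"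
  using cls_D by (auto simp: is_graph_def sym_def)

lemma K_agree: "e \<in> K \<Longrightarrow> H \<in> Cls \<Longrightarrow> (e \<in> H \<longleftrightarrow> e \<in> G)"
  using G_cls by (auto simp: known_edges_def)

lemma unknown_in: "e \<in> possible_edges V \<Longrightarrow> e \<notin> K \<Longrightarrow> \<exists>H\<in>Cls. e \<in> H"
  by (auto simp: known_edges_def)

lemma unknown_out: "e \<in> possible_edges V \<Longrightarrow> e \<notin> K \<Longrightarrow> \<exists>H\<in>Cls. e \<notin> H"
  by (auto simp: known_edges_def)

lemma possible_sym: "(u,v) \<in> possible_edges V \<Longrightarrow> (v,u) \<in> possible_edges V"
  by (auto simp: possible_edges_def)

lemma K_sym: "\<not> directed \<Longrightarrow> (u,v) \<in> K \<Longrightarrow> (v,u) \<in> K"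
  unfolding known_edges_def using possible_sym cls_sym by blast

lemma fin_poss: "finite (possible_edges V)"
proof -
  have "possible_edges V \<subseteq> V \<times> V" by (auto simp: possible_edges_def)
  then show ?thesis using finV by (meson finite_SigmaI finite_subset)
qed

definition Inv :: "'a \<Rightarrow> 'a graph \<times> 'a option \<times> 'a \<times> 'a list \<Rightarrow> bool" where
  "Inv w0 s = (case s of (C, prev, cur, acc) \<Rightarrow>
     is_graph directed V C \<and> C \<inter> K = G \<inter> K \<and> cur \<in> V \<and> w0 \<in> V \<and>
     (\<forall>v\<in>V. int (indeg C v) = int (indeg G v) + (if v = cur then 1 else 0) - (if v = w0 then 1 else 0)) \<and>
     (directed \<longrightarrow> (\<forall>v\<in>V. outdeg C v = outdeg G v)) \<and>
     (case prev of None \<Rightarrow> NN C cur \<noteq> {} \<and> cur = w0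
        | Some p \<Rightarrow> p \<in> V \<and> (p, cur) \<in> C \<and> (p, cur) \<notin> K \<and> cur \<noteq> w0))"

lemma C_agree: "C \<inter> K = G \<inter> K \<Longrightarrow> e \<in> K \<Longrightarrow> H \<in> Cls \<Longrightarrow> (e \<in> H \<longleftrightarrow> e \<in> C)"
  using K_agree by blast

lemma card_not_sub: "finite A \<Longrightarrow> finite B \<Longrightarrow> card A \<le> card B \<Longrightarrow> \<not> A \<subseteq> B \<Longrightarrow> \<exists>x. x \<in> B \<and> x \<notin> A"
proof (rule ccontr)
  assume "finite A" "finite B" "card A \<le> card B" "\<not> A \<subseteq> B" "\<not> (\<exists>x. x \<in> B \<and> x \<notin> A)"
  then have "B \<subseteq> A" by blast
  then have "B = A" using card_seteq[OF \<open>finite A\<close> \<open>B \<subseteq> A\<close>] \<open>card A \<le> card B\<close> by simp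
  then show False using \<open>\<not> A \<subseteq> B\<close> by simp
qed

lemma fin_out: "C \<subseteq> possible_edges V \<Longrightarrow> finite {w. (x, w) \<in> C}"
  by (rule finite_subset[OF _ finV]) (auto simp: possible_edges_def)

lemma fin_in: "C \<subseteq> possible_edges V \<Longrightarrow> finite {w. (w, x) \<in> C}"
  by (rule finite_subset[OF _ finV]) (auto simp: possible_edges_def)

lemma M_exists:
  assumes I: "Inv w0 (C, prev, cur, acc)" and H: "H \<in> Cls" and w1: "w1 \<in> V"
    and e: "(w1, cur) \<in> C" "(w1, cur) \<notin> H"
  shows "\<exists>x. (w1, x) \<in> H \<and> (w1, x) \<notin> C \<and> x \<in> MM C w1"
proof -
  from I have gC: "is_graph directed V C" and agr: "C \<inter> K = G \<inter> K" and cur: "cur \<in> V"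
    and deg: "\<forall>v\<in>V. int (indeg C v) = int (indeg G v) + (if v = cur then 1 else 0) - (if v = w0 then 1 else 0)"
    and odeg: "directed \<longrightarrow> (\<forall>v\<in>V. outdeg C v = outdeg G v)"
    by (auto simp: Inv_def)
  have Cposs: "C \<subseteq> possible_edges V" using gC by (simp add: is_graph_def)
  have Hposs: "H \<subseteq> possible_edges V" using cls_sub[OF H] .
  define A where "A = {w. (w1, w) \<in> C}"
  define B where "B = {w. (w1, w) \<in> H}"
  have finA: "finite A" unfolding A_def by (rule fin_out[OF Cposs])
  have finB: "finite B" unfolding B_def by (rule fin_out[OF Hposs])
  have w1cur: "w1 \<noteq> cur" using e Cposs by (auto simp: possible_edges_def)
  have cardAB: "card A \<le> card B"
  proof (cases directed)
    case True
    then have "outdeg C w1 = outdeg G w1" using odeg w1 by auto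
    also have "\<dots> = outdeg H w1" using cls_outdeg[OF H w1] by simp
    finally show ?thesis by (simp add: A_def B_def outdeg_def)
  next
    case False
    have symC: "sym C" using gC False by (simp add: is_graph_def)
    have "A = {u. (u, w1) \<in> C}" unfolding A_def using symC by (auto simp: sym_def)
    then have "int (card A) = int (indeg C w1)" by (simp add: indeg_def)
    also have "\<dots> \<le> int (indeg G w1)" using deg w1 w1cur by auto
    also have "indeg G w1 = indeg H w1" using cls_indeg[OF H w1] by simp
    also have "indeg H w1 = card B"
    proof -
      have "{u. (u, w1) \<in> H} = B" unfolding B_def using cls_sym[OF H False] by blast
      then show ?thesis by (simp add: indeg_def)
    qed
    finally show ?thesis by simp
  qed
  have "\<not> A \<subseteq> B" using e by (auto simp: A_def B_def)
  then obtain x where x: "x \<in> B" "x \<notin> A" using card_not_sub[OF finA finB cardAB] by blast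
  have px: "(w1, x) \<in> possible_edges V" using x Hposs by (auto simp: B_def)
  have "(w1, x) \<notin> K" using x C_agree[OF agr _ H, of "(w1,x)"] by (auto simp: A_def B_def)
  then have "x \<in> MM C w1" using px x by (auto simp: Mset_def A_def possible_edges_def)
  then show ?thesis using x by (auto simp: A_def B_def)
qed

lemma M_nonempty:
  assumes I: "Inv w0 (C, prev, cur, acc)" and w1: "w1 \<in> NN C cur"
  shows "MM C w1 \<noteq> {}"
proof -
  from I have gC: "is_graph directed V C" by (auto simp: Inv_def)
  have e: "(w1, cur) \<in> C" "(w1, cur) \<notin> K" "w1 \<in> V" using w1 by (auto simp: Nset_def)
  have "(w1, cur) \<in> possible_edges V" using e gC by (auto simp: is_graph_def)
  then obtain H where "H \<in> Cls" "(w1, cur) \<notin> H" using unknown_out e by blast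
  then show ?thesis using M_exists[OF I _ e(3) e(1)] by blast
qed

lemma N_exists:
  assumes I: "Inv w0 (C, Some p, cur, acc)" and H: "H \<in> Cls" and pH: "(p, cur) \<in> H"
  shows "\<exists>u. (u, cur) \<in> C \<and> (u, cur) \<notin> H \<and> u \<in> NN C cur - {p}"
proof -
  from I have gC: "is_graph directed V C" and agr: "C \<inter> K = G \<inter> K" and cur: "cur \<in> V"
    and deg: "\<forall>v\<in>V. int (indeg C v) = int (indeg G v) + (if v = cur then 1 else 0) - (if v = w0 then 1 else 0)"
    and cw0: "cur \<noteq> w0"
    by (auto simp: Inv_def)
  have Cposs: "C \<subseteq> possible_edges V" using gC by (simp add: is_graph_def)
  have Hposs: "H \<subseteq> possible_edges V" using cls_sub[OF H] .
  define A where "A = {u. (u, cur) \<in> C}"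
  define B where "B = {u. (u, cur) \<in> H}"
  have finA: "finite A" unfolding A_def by (rule fin_in[OF Cposs])
  have finB: "finite B" unfolding B_def by (rule fin_in[OF Hposs])
  have "int (indeg C cur) = int (indeg G cur) + 1" using deg[rule_format, OF cur] cw0 by simp
  moreover have "card A = indeg C cur" by (simp add: A_def indeg_def)
  moreover have "indeg G cur = card B" using cls_indeg[OF H cur] by (simp add: B_def indeg_def)
  ultimately have "card B < card A" by simp
  have "\<not> A \<subseteq> B"
  proof
    assume "A \<subseteq> B"
    then have "card A \<le> card B" by (rule card_mono[OF finB])
    then show False using \<open>card B < card A\<close> by simp
  qed
  then obtain u where u: "u \<in> A" "u \<notin> B" by blast
  have pu: "(u, cur) \<in> possible_edges V" using u Cposs by (auto simp: A_def)
  have "(u, cur) \<notin> K" using u C_agree[OF agr _ H, of "(u,cur)"] by (auto simp: A_def B_def)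
  moreover have "u \<noteq> p" using u pH by (auto simp: B_def)
  moreover have "u \<in> V" using pu by (simp add: possible_edges_def)
  moreover have "(u, cur) \<in> C" "(u, cur) \<notin> H" using u by (simp_all add: A_def B_def)
  ultimately show ?thesis by (intro exI[of _ u]) (simp add: Nset_def)
qed

lemma card_swap: "finite A \<Longrightarrow> a \<in> A \<Longrightarrow> b \<notin> A \<Longrightarrow> card (insert b (A - {a})) = card A"
proof -
  assume f: "finite A" and a: "a \<in> A" and b: "b \<notin> A"
  have "card (insert b (A - {a})) = Suc (card (A - {a}))" using f b by simp
  also have "\<dots> = card A" by (rule card_Suc_Diff1[OF f a])
  finally show ?thesis .
qed

lemma Inv_step:
  assumes I: "Inv w0 (C, prev, cur, acc)" and w1: "w1 \<in> NN C cur - set_option prev"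
    and w2: "w2 \<in> MM C w1" and w20: "w2 \<noteq> w0"
  shows "Inv w0 (add_edge directed (del_edge directed C (w1, cur)) (w1, w2), Some w1, w2, acc')"
proof -
  from I have gC: "is_graph directed V C" and agr: "C \<inter> K = G \<inter> K" and cur: "cur \<in> V" and w0: "w0 \<in> V"
    and deg: "\<forall>v\<in>V. int (indeg C v) = int (indeg G v) + (if v = cur then 1 else 0) - (if v = w0 then 1 else 0)"
    and odeg: "directed \<longrightarrow> (\<forall>v\<in>V. outdeg C v = outdeg G v)"
    by (auto simp: Inv_def)
  have Cposs: "C \<subseteq> possible_edges V" using gC by (simp add: is_graph_def)
  have e1: "(w1, cur) \<in> C" "(w1, cur) \<notin> K" "w1 \<in> V" using w1 by (auto simp: Nset_def)
  have e2: "w2 \<in> V" "(w1, w2) \<in> possible_edges V" "(w1, w2) \<notin> C" "(w1, w2) \<notin> K" using w2 by (auto simp: Mset_def)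
  have d1: "w1 \<noteq> cur" using e1 Cposs by (auto simp: possible_edges_def)
  have d2: "w1 \<noteq> w2" using e2 by (auto simp: possible_edges_def)
  have d3: "w2 \<noteq> cur" using e1 e2 by auto
  define C' where "C' = add_edge directed (del_edge directed C (w1, cur)) (w1, w2)"
  have indeg_rel: "int (indeg C' v) = int (indeg C v) + (if v = w2 then 1 else 0) - (if v = cur then 1 else 0)" if v: "v \<in> V" for v
  proof (cases directed)
    case True
    have C'd: "C' = insert (w1, w2) (C - {(w1, cur)})" using True by (simp add: C'_def add_edge_def del_edge_def)
    have fin: "finite {u. (u, v) \<in> C}" by (rule fin_in[OF Cposs])
    show ?thesis
    proof (cases "v = w2")
      case True
      then have "{u. (u, v) \<in> C'} = insert w1 {u. (u, v) \<in> C}" using C'd d3 by auto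
      moreover have "w1 \<notin> {u. (u, v) \<in> C}" using True e2 by simp
      ultimately show ?thesis using True d3 fin by (simp add: indeg_def)
    next
      case False
      show ?thesis
      proof (cases "v = cur")
        case True
        then have "{u. (u, v) \<in> C'} = {u. (u, v) \<in> C} - {w1}" using C'd False by auto
        moreover have mem: "w1 \<in> {u. (u, v) \<in> C}" using True e1 by simp
        ultimately have "card {u. (u, v) \<in> C'} = card {u. (u, v) \<in> C} - 1" using fin by simp
        moreover have "card {u. (u, v) \<in> C} > 0" using mem fin by (auto simp: card_gt_0_iff)
        ultimately show ?thesis using True False by (simp add: indeg_def of_nat_diff)
      next
        case False2: False
        then have "{u. (u, v) \<in> C'} = {u. (u, v) \<in> C}" using C'd False by auto
        then show ?thesis using False False2 by (simp add: indeg_def)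
      qed
    qed
  next
    case False
    have symC: "sym C" using gC False by (simp add: is_graph_def)
    have C'u: "C' = insert (w1, w2) (insert (w2, w1) (C - {(w1, cur), (cur, w1)}))" using False by (simp add: C'_def add_edge_def del_edge_def)
    have fin: "finite {u. (u, v) \<in> C}" by (rule fin_in[OF Cposs])
    have cw1: "(cur, w1) \<in> C" using symC e1 by (auto simp: sym_def)
    have w21: "(w2, w1) \<notin> C" using symC e2 by (auto simp: sym_def)
    show ?thesis
    proof (cases "v = w2")
      case True
      then have "{u. (u, v) \<in> C'} = insert w1 {u. (u, v) \<in> C}" using C'u d1 d2 d3 by auto
      moreover have "w1 \<notin> {u. (u, v) \<in> C}" using True e2 by simp
      ultimately show ?thesis using True d3 fin by (simp add: indeg_def)
    next
      case nw2: False
      show ?thesis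
      proof (cases "v = cur")
        case True
        then have "{u. (u, v) \<in> C'} = {u. (u, v) \<in> C} - {w1}" using C'u nw2 d1 d2 d3 by auto
        moreover have mem: "w1 \<in> {u. (u, v) \<in> C}" using True e1 by simp
        ultimately have "card {u. (u, v) \<in> C'} = card {u. (u, v) \<in> C} - 1" using fin by simp
        moreover have "card {u. (u, v) \<in> C} > 0" using mem fin by (auto simp: card_gt_0_iff)
        ultimately show ?thesis using True nw2 by (simp add: indeg_def of_nat_diff)
      next
        case ncur: False
        show ?thesis
        proof (cases "v = w1")
          case True
          then have "{u. (u, v) \<in> C'} = insert w2 ({u. (u, v) \<in> C} - {cur})" using C'u d1 d2 d3 by auto
          moreover have "card (insert w2 ({u. (u, v) \<in> C} - {cur})) = card {u. (u, v) \<in> C}"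
            by (rule card_swap[OF fin]) (use True cw1 w21 in simp_all)
          ultimately show ?thesis using nw2 ncur by (simp add: indeg_def)
        next
          case False
          then have "{u. (u, v) \<in> C'} = {u. (u, v) \<in> C}" using C'u nw2 ncur by auto
          then show ?thesis using nw2 ncur by (simp add: indeg_def)
        qed
      qed
    qed
  qed
  have outdeg_rel: "outdeg C' v = outdeg C v" if dir: directed and v: "v \<in> V" for v
  proof -
    have C'd: "C' = insert (w1, w2) (C - {(w1, cur)})" using dir by (simp add: C'_def add_edge_def del_edge_def)
    have fin: "finite {u. (v, u) \<in> C}" by (rule fin_out[OF Cposs])
    show ?thesis
    proof (cases "v = w1")
      case True
      then have "{u. (v, u) \<in> C'} = insert w2 ({u. (v, u) \<in> C} - {cur})" using C'd d3 by auto
      moreover have "card (insert w2 ({u. (v, u) \<in> C} - {cur})) = card {u. (v, u) \<in> C}"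
        by (rule card_swap[OF fin]) (use True e1 e2 in simp_all)
      ultimately show ?thesis by (simp add: outdeg_def)
    next
      case False
      then have "{u. (v, u) \<in> C'} = {u. (v, u) \<in> C}" using C'd by auto
      then show ?thesis by (simp add: outdeg_def)
    qed
  qed
  have gC': "is_graph directed V C'"
  proof (cases directed)
    case True
    then show ?thesis using Cposs e2 by (auto simp: C'_def add_edge_def del_edge_def is_graph_def)
  next
    case False
    have symC: "sym C" using gC False by (simp add: is_graph_def)
    have "C' \<subseteq> possible_edges V" using Cposs e2 possible_sym[OF e2(2)] False
      by (auto simp: C'_def add_edge_def del_edge_def)
    moreover have "sym C'" using symC False unfolding sym_def
      by (auto simp: C'_def add_edge_def del_edge_def)
    ultimately show ?thesis by (simp add: is_graph_def)
  qed
  have agr': "C' \<inter> K = G \<inter> K"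
  proof -
    have n1: "(cur, w1) \<notin> K" if "\<not> directed" using K_sym[OF that] e1 by blast
    have n2: "(w2, w1) \<notin> K" if "\<not> directed" using K_sym[OF that] e2 by blast
    have "C' \<inter> K = C \<inter> K"
      using e1 e2 n1 n2 by (auto simp: C'_def add_edge_def del_edge_def split: if_splits)
    then show ?thesis using agr by simp
  qed
  have deg': "\<forall>v\<in>V. int (indeg C' v) = int (indeg G v) + (if v = w2 then 1 else 0) - (if v = w0 then 1 else 0)"
  proof
    fix v assume v: "v \<in> V"
    show "int (indeg C' v) = int (indeg G v) + (if v = w2 then 1 else 0) - (if v = w0 then 1 else 0)"
      using indeg_rel[OF v] deg[rule_format, OF v] by simp
  qed
  have odeg': "directed \<longrightarrow> (\<forall>v\<in>V. outdeg C' v = outdeg G v)" using outdeg_rel odeg by simp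
  have "(w1, w2) \<in> C'" by (simp add: C'_def add_edge_def)
  then show ?thesis unfolding C'_def[symmetric] Inv_def
    using gC' agr' e2 w0 deg' odeg' e1 e2 w20 by simp
qed

definition outc :: "'a \<Rightarrow> 'a graph \<times> 'a option \<times> 'a \<times> 'a list \<Rightarrow> 'a \<Rightarrow> 'a \<Rightarrow> 'a list + ('a graph \<times> 'a option \<times> 'a \<times> 'a list)" where
  "outc w0 s w1 w2 = (case s of (C, prev, cur, acc) \<Rightarrow>
     if w2 = w0 then Inl (rev (w2 # w1 # acc))
     else Inr (add_edge directed (del_edge directed C (w1, cur)) (w1, w2), Some w1, w2, w2 # w1 # acc))"

definition body :: "'a \<Rightarrow> 'a graph \<times> 'a option \<times> 'a \<times> 'a list \<Rightarrow> ('a list + ('a graph \<times> 'a option \<times> 'a \<times> 'a list)) spmf" where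
  "body w0 s = (case s of (C, prev, cur, acc) \<Rightarrow>
     spmf_of_set (NN C cur - set_option prev) \<bind> (\<lambda>w1. spmf_of_set (MM C w1) \<bind> (\<lambda>w2. return_spmf (outc w0 s w1 w2))))"

definition LL :: "'a \<Rightarrow> 'a graph \<times> 'a option \<times> 'a \<times> 'a list \<Rightarrow> 'a list spmf" where
  "LL w0 s = (case s of (C, prev, cur, acc) \<Rightarrow> sampler_loop directed V G0 F w0 C prev cur acc)"

definition dd :: "'a graph \<times> 'a option \<times> 'a \<times> 'a list \<Rightarrow> nat" where
  "dd s = (case s of (C, prev, cur, acc) \<Rightarrow> (case prev of None \<Rightarrow> Suc (card (possible_edges V))
      | Some p \<Rightarrow> (LEAST k. \<exists>H\<in>Cls. (p, cur) \<in> H \<and> k = card (C - H))))"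

lemma LL_eq: "LL w0 s = body w0 s \<bind> kont (LL w0)"
proof -
  obtain C prev cur acc where s: "s = (C, prev, cur, acc)" by (cases s) auto
  show ?thesis unfolding s
    apply (subst (1) LL_def)
    apply (simp only: prod.case)
    apply (subst sampler_loop.simps)
    apply (simp add: body_def outc_def kont_def Let_def)
    apply (intro bind_spmf_cong refl)
    apply (simp add: LL_def)
    done
qed

lemma finN: "finite (NN C cur - X)"
  by (rule finite_subset[OF _ finV]) (auto simp: Nset_def)

lemma finM: "finite (MM C w)"
  by (rule finite_subset[OF _ finV]) (auto simp: Mset_def)

lemma set_body:
  assumes "x \<in> set_spmf (body w0 (C, prev, cur, acc))"
  shows "\<exists>w1 w2. w1 \<in> NN C cur - set_option prev \<and> w2 \<in> MM C w1 \<and> x = outc w0 (C, prev, cur, acc) w1 w2"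
  using assms finN finM by (auto simp: body_def set_bind_spmf)

lemma N'_nonempty:
  assumes I: "Inv w0 (C, prev, cur, acc)"
  shows "NN C cur - set_option prev \<noteq> {}"
proof (cases prev)
  case None
  then show ?thesis using I by (auto simp: Inv_def)
next
  case (Some p)
  from I Some have gC: "is_graph directed V C" and pc: "(p, cur) \<in> C" "(p, cur) \<notin> K"
    by (auto simp: Inv_def)
  have "(p, cur) \<in> possible_edges V" using gC pc by (auto simp: is_graph_def)
  then obtain H where "H \<in> Cls" "(p, cur) \<in> H" using unknown_in pc by blast
  from N_exists[OF I[unfolded Some] this] show ?thesis using Some by auto
qed

lemma ll_body: "Inv w0 s \<Longrightarrow> lossless_spmf (body w0 s)"
proof -
  assume I: "Inv w0 s"
  obtain C prev cur acc where s: "s = (C, prev, cur, acc)" by (cases s) auto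
  have "NN C cur - set_option prev \<noteq> {}" using N'_nonempty I s by simp
  moreover have "MM C w1 \<noteq> {}" if "w1 \<in> NN C cur - set_option prev" for w1
    using M_nonempty[of w0 C prev cur acc w1] I s that by simp
  ultimately show ?thesis unfolding s body_def using finN finM by simp
qed

lemma body_prob:
  assumes w1: "w1 \<in> NN C cur - set_option prev" and w2: "w2 \<in> MM C w1"
  shows "1 / (real (card V))^2 \<le> spmf (body w0 (C, prev, cur, acc)) (outc w0 (C, prev, cur, acc) w1 w2)"
proof -
  let ?A = "NN C cur - set_option prev"
  let ?B = "MM C w1"
  let ?o = "outc w0 (C, prev, cur, acc) w1 w2"
  have cA: "card ?A \<le> card V" by (rule card_mono[OF finV]) (auto simp: Nset_def)
  have cB: "card ?B \<le> card V" by (rule card_mono[OF finV]) (auto simp: Mset_def)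
  have pA: "0 < card ?A" using w1 finN by (auto simp: card_gt_0_iff)
  have pB: "0 < card ?B" using w2 finM by (auto simp: card_gt_0_iff)
  have "1 / (real (card V))^2 = (1 / real (card V)) * (1 / real (card V))" by (simp add: power2_eq_square)
  also have "\<dots> \<le> (1 / real (card ?A)) * (1 / real (card ?B))"
    using cA cB pA pB by (intro mult_mono) (simp_all add: frac_le)
  also have "\<dots> = spmf (spmf_of_set ?A) w1 * (spmf (spmf_of_set ?B) w2 * spmf (return_spmf ?o) ?o)"
    using w1 w2 by (simp add: spmf_of_set)
  also have "\<dots> \<le> spmf (spmf_of_set ?A) w1 * spmf (spmf_of_set ?B \<bind> (\<lambda>w2. return_spmf (outc w0 (C, prev, cur, acc) w1 w2))) ?o"
    by (intro mult_left_mono spmf_bind_point) simp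
  also have "\<dots> \<le> spmf (body w0 (C, prev, cur, acc)) ?o"
    unfolding body_def by (simp only: prod.case) (rule spmf_bind_point)
  finally show ?thesis .
qed

lemma dd_le: "(p, cur) \<in> H \<Longrightarrow> H \<in> Cls \<Longrightarrow> dd (C, Some p, cur, acc) \<le> card (C - H)"
  unfolding dd_def by (auto intro: Least_le)

lemma dd_attain:
  assumes I: "Inv w0 (C, Some p, cur, acc)"
  shows "\<exists>H\<in>Cls. (p, cur) \<in> H \<and> dd (C, Some p, cur, acc) = card (C - H)"
proof -
  from I have gC: "is_graph directed V C" and pc: "(p, cur) \<in> C" "(p, cur) \<notin> K"
    by (auto simp: Inv_def)
  have "(p, cur) \<in> possible_edges V" using gC pc by (auto simp: is_graph_def)
  then obtain H where "H \<in> Cls" "(p, cur) \<in> H" using unknown_in pc by blast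
  then have ex: "\<exists>k. \<exists>H\<in>Cls. (p, cur) \<in> H \<and> k = card (C - H)" by blast
  show ?thesis using LeastI_ex[OF ex] unfolding dd_def by auto
qed

lemma dd_bound: "Inv w0 s \<Longrightarrow> dd s \<le> Suc (card (possible_edges V))"
proof -
  assume I: "Inv w0 s"
  obtain C prev cur acc where s: "s = (C, prev, cur, acc)" by (cases s) auto
  show ?thesis
  proof (cases prev)
    case None then show ?thesis by (simp add: s dd_def)
  next
    case (Some p)
    obtain H where H: "H \<in> Cls" "(p, cur) \<in> H" "dd s = card (C - H)" using dd_attain I s Some by blast
    have "C \<subseteq> possible_edges V" using I s by (simp add: Inv_def is_graph_def)
    then have "card (C - H) \<le> card (possible_edges V)" by (intro card_mono[OF fin_poss]) auto
    then show ?thesis using H by simp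
  qed
qed

lemma dd_Some_bound: "Inv w0 (C, Some p, cur, acc) \<Longrightarrow> dd (C, Some p, cur, acc) \<le> card (possible_edges V)"
proof -
  assume I: "Inv w0 (C, Some p, cur, acc)"
  obtain H where H: "H \<in> Cls" "(p, cur) \<in> H" "dd (C, Some p, cur, acc) = card (C - H)" using dd_attain[OF I] by blast
  have "C \<subseteq> possible_edges V" using I by (simp add: Inv_def is_graph_def)
  then have "card (C - H) \<le> card (possible_edges V)" by (intro card_mono[OF fin_poss]) auto
  then show ?thesis using H by simp
qed

lemma card_dec:
  assumes I: "Inv w0 (C, prev, cur, acc)" and H: "H \<in> Cls" and e: "(u, cur) \<in> C" "(u, cur) \<notin> H" and ux: "(u, x) \<in> H"
  shows "card (add_edge directed (del_edge directed C (u, cur)) (u, x) - H) < card (C - H)"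
proof -
  have Cposs: "C \<subseteq> possible_edges V" using I by (simp add: Inv_def is_graph_def)
  have finC: "finite (C - H)" using finite_subset[OF Cposs fin_poss] by simp
  have sub: "add_edge directed (del_edge directed C (u, cur)) (u, x) - H \<subseteq> (C - H) - {(u, cur)}"
  proof (cases directed)
    case True then show ?thesis using ux by (auto simp: add_edge_def del_edge_def)
  next
    case False
    have "(x, u) \<in> H" using cls_sym[OF H False ux] .
    then show ?thesis using ux False by (auto simp: add_edge_def del_edge_def)
  qed
  have "card (add_edge directed (del_edge directed C (u, cur)) (u, x) - H) \<le> card ((C - H) - {(u, cur)})"
    by (rule card_mono[OF _ sub]) (use finC in simp)
  also have "\<dots> < card (C - H)" by (rule card_Diff1_less[OF finC]) (use e in simp)
  finally show ?thesis .
qed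

lemma progress:
  assumes I: "Inv w0 s"
  shows "\<exists>x. 1 / (real (card V))^2 \<le> spmf (body w0 s) x \<and> (case x of Inl _ \<Rightarrow> True | Inr s' \<Rightarrow> dd s' < dd s)"
proof -
  obtain C prev cur acc where s: "s = (C, prev, cur, acc)" by (cases s) auto
  show ?thesis
  proof (cases prev)
    case None
    have I': "Inv w0 (C, None, cur, acc)" using I s None by simp
    obtain w1 where w1: "w1 \<in> NN C cur" using I' by (auto simp: Inv_def)
    obtain w2 where w2: "w2 \<in> MM C w1" using M_nonempty[OF I' w1] by blast
    have w1': "w1 \<in> NN C cur - set_option prev" using w1 None by simp
    let ?o = "outc w0 s w1 w2"
    have pr: "1 / (real (card V))^2 \<le> spmf (body w0 s) ?o" using body_prob[OF w1' w2] s by simp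
    have "case ?o of Inl _ \<Rightarrow> True | Inr s' \<Rightarrow> dd s' < dd s"
    proof (cases "w2 = w0")
      case True then show ?thesis by (simp add: outc_def s)
    next
      case False
      have In: "Inv w0 (add_edge directed (del_edge directed C (w1, cur)) (w1, w2), Some w1, w2, w2 # w1 # acc)"
        using Inv_step[OF I[unfolded s] w1' w2 False] .
      show ?thesis using dd_Some_bound[OF In] False None by (simp add: outc_def s dd_def)
    qed
    then show ?thesis using pr by blast
  next
    case (Some p)
    have I': "Inv w0 (C, Some p, cur, acc)" using I s Some by simp
    obtain H where H: "H \<in> Cls" "(p, cur) \<in> H" "dd (C, Some p, cur, acc) = card (C - H)" using dd_attain[OF I'] by blast
    obtain u where u: "(u, cur) \<in> C" "(u, cur) \<notin> H" "u \<in> NN C cur - {p}" using N_exists[OF I' H(1,2)] by blast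
    have uV: "u \<in> V" using u by (simp add: Nset_def)
    obtain x where x: "(u, x) \<in> H" "(u, x) \<notin> C" "x \<in> MM C u" using M_exists[OF I' H(1) uV u(1,2)] by blast
    have u': "u \<in> NN C cur - set_option prev" using u Some by simp
    let ?o = "outc w0 s u x"
    have pr: "1 / (real (card V))^2 \<le> spmf (body w0 s) ?o" using body_prob[OF u' x(3)] s by simp
    have "case ?o of Inl _ \<Rightarrow> True | Inr s' \<Rightarrow> dd s' < dd s"
    proof (cases "x = w0")
      case True then show ?thesis by (simp add: outc_def s)
    next
      case False
      have "dd (add_edge directed (del_edge directed C (u, cur)) (u, x), Some u, x, x # u # acc)
          \<le> card (add_edge directed (del_edge directed C (u, cur)) (u, x) - H)"
        by (rule dd_le[OF x(1) H(1)])
      also have "\<dots> < card (C - H)" by (rule card_dec[OF I' H(1) u(1,2) x(1)])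
      finally show ?thesis using False H(3) Some by (simp add: outc_def s)
    qed
    then show ?thesis using pr by blast
  qed
qed

lemma walk_inst:
  assumes "w0 \<in> V"
  shows "walk (body w0) (LL w0) (Inv w0) dd (Suc (card (possible_edges V))) (1 / (real (card V))^2)
           length (\<lambda>s. length (snd (snd (snd s)))) 2"
proof
  have cV: "0 < card V" using assms finV by (auto simp: card_gt_0_iff)
  show "\<And>s. LL w0 s = body w0 s \<bind> kont (LL w0)" by (rule LL_eq)
  show "\<And>s s'. Inv w0 s \<Longrightarrow> Inr s' \<in> set_spmf (body w0 s) \<Longrightarrow> Inv w0 s'"
  proof -
    fix s s' assume I: "Inv w0 s" and x: "Inr s' \<in> set_spmf (body w0 s)"
    obtain C prev cur acc where s: "s = (C, prev, cur, acc)" by (cases s) auto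
    obtain w1 w2 where w: "w1 \<in> NN C cur - set_option prev" "w2 \<in> MM C w1" "Inr s' = outc w0 s w1 w2"
      using set_body[of _ w0 C prev cur acc] x s by blast
    then have "w2 \<noteq> w0" and s': "s' = (add_edge directed (del_edge directed C (w1, cur)) (w1, w2), Some w1, w2, w2 # w1 # acc)"
      by (auto simp: outc_def s split: if_splits)
    then show "Inv w0 s'" using Inv_step[OF I[unfolded s] w(1,2)] by simp
  qed
  show "\<And>s. Inv w0 s \<Longrightarrow> lossless_spmf (body w0 s)" by (rule ll_body)
  show "\<And>s. Inv w0 s \<Longrightarrow> \<exists>x. 1 / (real (card V))^2 \<le> spmf (body w0 s) x \<and> (case x of Inl _ \<Rightarrow> True | Inr s' \<Rightarrow> dd s' < dd s)"
    by (rule progress)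
  show "\<And>s. Inv w0 s \<Longrightarrow> dd s \<le> Suc (card (possible_edges V))" by (rule dd_bound)
  show "0 < 1 / (real (card V))^2" using cV by simp
  show "1 / (real (card V))^2 \<le> 1" using cV by simp
  show "\<And>s r. Inv w0 s \<Longrightarrow> Inl r \<in> set_spmf (body w0 s) \<Longrightarrow> length r \<le> length (snd (snd (snd s))) + 2"
  proof -
    fix s r assume x: "Inl r \<in> set_spmf (body w0 s)"
    obtain C prev cur acc where s: "s = (C, prev, cur, acc)" by (cases s) auto
    obtain w1 w2 where "Inl r = outc w0 s w1 w2" using set_body[of _ w0 C prev cur acc] x s by blast
    then show "length r \<le> length (snd (snd (snd s))) + 2" by (auto simp: outc_def s split: if_splits)
  qed
  show "\<And>s s'. Inv w0 s \<Longrightarrow> Inr s' \<in> set_spmf (body w0 s) \<Longrightarrow> length (snd (snd (snd s'))) \<le> length (snd (snd (snd s))) + 2"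
  proof -
    fix s s' assume x: "Inr s' \<in> set_spmf (body w0 s)"
    obtain C prev cur acc where s: "s = (C, prev, cur, acc)" by (cases s) auto
    obtain w1 w2 where "Inr s' = outc w0 s w1 w2" using set_body[of _ w0 C prev cur acc] x s by blast
    then show "length (snd (snd (snd s'))) \<le> length (snd (snd (snd s))) + 2" by (auto simp: outc_def s split: if_splits)
  qed
qed

end


theorem proposition1:
  fixes directed :: bool and V :: "'a set" and G0 G :: "'a graph" and F :: "('a \<times> 'a) set"
  assumes "finite V"
    and "is_graph directed V G0"
    and "F \<subseteq> possible_edges V"
    and "\<not> directed \<Longrightarrow> sym F"
    and "G \<in> graph_class directed V G0 F"
    and "{v \<in> V. Nset directed V G0 F G v \<noteq> {}} \<noteq> {}"
  shows "lossless_spmf (sampler_walk directed V G0 F G) \<and>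
         (\<integral>\<^sup>+ W. ennreal (real (length W - 1)) \<partial>measure_spmf (sampler_walk directed V G0 F G)) < \<infinity>"
proof -
  interpret sctx directed V G0 G F using assms(1,5) by unfold_locales
  define A where "A = {v \<in> V. Nset directed V G0 F G v \<noteq> {}}"
  define q where "q = 1 / (real (card V))^2"
  define Bd where "Bd = real 1 + real (2 * Suc (Suc (card (possible_edges V)))) / q ^ Suc (Suc (card (possible_edges V)))"
  have finA: "finite A" unfolding A_def using assms(1) by simp
  have neA: "A \<noteq> {}" unfolding A_def using assms(6) .
  have each: "lossless_spmf (sampler_loop directed V G0 F w0 G None w0 [w0]) \<and>
      (\<integral>\<^sup>+ W. ennreal (real (length W)) \<partial>measure_spmf (sampler_loop directed V G0 F w0 G None w0 [w0])) \<le> ennreal Bd"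
    if w0: "w0 \<in> A" for w0
  proof -
    have w0V: "w0 \<in> V" using w0 by (simp add: A_def)
    interpret walk "body w0" "LL w0" "Inv w0" dd "Suc (card (possible_edges V))" q
      length "\<lambda>s. length (snd (snd (snd s)))" 2
      unfolding q_def by (rule walk_inst[OF w0V])
    have gG: "is_graph directed V G" using cls_D[OF G_cls] by simp
    have I0: "Inv w0 (G, None, w0, [w0])" using gG w0 w0V by (auto simp: Inv_def A_def)
    have eq: "sampler_loop directed V G0 F w0 G None w0 [w0] = LL w0 (G, None, w0, [w0])" by (simp add: LL_def)
    show ?thesis unfolding eq using L_lossless[OF I0 I0] L_expect[OF I0 I0] by (simp add: Bd_def)
  qed
  have walk_eq: "sampler_walk directed V G0 F G = spmf_of_set A \<bind> (\<lambda>w0. sampler_loop directed V G0 F w0 G None w0 [w0])"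
    by (simp add: sampler_walk_def A_def)
  have ll: "lossless_spmf (sampler_walk directed V G0 F G)"
    unfolding walk_eq using finA neA each by simp
  have "(\<integral>\<^sup>+ W. ennreal (real (length W - 1)) \<partial>measure_spmf (sampler_walk directed V G0 F G))
      = (\<integral>\<^sup>+ w0. \<integral>\<^sup>+ W. ennreal (real (length W - 1)) \<partial>measure_spmf (sampler_loop directed V G0 F w0 G None w0 [w0]) \<partial>measure_spmf (spmf_of_set A))"
    unfolding walk_eq by (rule nn_integral_bind_spmf)
  also have "\<dots> \<le> (\<integral>\<^sup>+ w0. ennreal Bd \<partial>measure_spmf (spmf_of_set A))"
  proof (rule nn_integral_mono_AE, unfold AE_measure_spmf_iff, intro ballI)
    fix w0 assume "w0 \<in> set_spmf (spmf_of_set A)"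
    then have w0: "w0 \<in> A" using finA by simp
    have "(\<integral>\<^sup>+ W. ennreal (real (length W - 1)) \<partial>measure_spmf (sampler_loop directed V G0 F w0 G None w0 [w0]))
        \<le> (\<integral>\<^sup>+ W. ennreal (real (length W)) \<partial>measure_spmf (sampler_loop directed V G0 F w0 G None w0 [w0]))"
      by (rule nn_integral_mono) (rule ennreal_leI, simp)
    also have "\<dots> \<le> ennreal Bd" using each[OF w0] by simp
    finally show "(\<integral>\<^sup>+ W. ennreal (real (length W - 1)) \<partial>measure_spmf (sampler_loop directed V G0 F w0 G None w0 [w0])) \<le> ennreal Bd" .
  qed
  also have "\<dots> = ennreal Bd * ennreal (weight_spmf (spmf_of_set A))"
    by (simp add: space_measure_spmf measure_spmf.emeasure_eq_measure weight_spmf_def)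
  also have "\<dots> < \<infinity>" by (simp add: ennreal_mult_less_top)
  finally show ?thesis using ll by simp
qed

end
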